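(* Let $P\subseteq\mathbb{R}^n$ be an $n$-dimensional rational polytope, let $\pi:\mathbb{R}^n\to\mathbb{R}^k$ be a surjective linear map with $\pi(\mathbb{Z}^n)=\mathbb{Z}^k$, and let $Q:=\pi(P)$. Assume $P$ is $\alpha$-canonical for some $\alpha>0$. Then $\alpha\, d_P(x)\le d_Q(\pi(x))$ for all $x\in P$.
   Context: For a full-dimensional rational polytope $R\subseteq\mathbb{R}^d$ (lattice $\mathbb{Z}^d$), write $R$ irredundantly as $\{x:\langle a_i,x\rangle\ge b_i\}$ with primitive $a_i\in(\mathbb{Z}^d)^*$, each inequality defining a facet, and set $d_R(x):=\min_i(\langle a_i,x\rangle-b_i)$. For a rational cone $\sigma\subseteq(\mathbb{R}^n)^*$ with primitive ray generators $v_1,\dots,v_m\in(\mathbb{Z}^n)^*$, the height function is $\mathrm{height}_\sigma(y):=\max\{\sum_i\lambda_i:\lambda_i\ge0,\ \sum_i\lambda_iv_i=y\}$ for $y\in\sigma$; $\sigma$ is $\alpha$-canonical if $\mathrm{height}_\sigma(y)\ge\alpha$ for every nonzero $y\in\sigma\cap(\mathbb{Z}^n)^*$. A rational polytope is $\alpha$-canonical if all cones of its (inner) normal fan are $\alpha$-canonical. *)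

theory Defs
  imports "HOL-Analysis.Analysis"
begin

text \<open>Lattice points Z^n (also used for the dual lattice, identifying (R^n)^* with R^n
  via the standard inner product).\<close>
definition lattice_pt :: "real^'n \<Rightarrow> bool" where
  "lattice_pt x \<longleftrightarrow> (\<forall>i. x $ i \<in> \<int>)"

definition rational_pt :: "real^'n \<Rightarrow> bool" where
  "rational_pt x \<longleftrightarrow> (\<forall>i. x $ i \<in> \<rat>)"

definition primitive :: "real^'n \<Rightarrow> bool" where
  "primitive a \<longleftrightarrow> lattice_pt a \<and> a \<noteq> 0 \<and>
     \<not> (\<exists>(m::int) b. m > 1 \<and> lattice_pt b \<and> a = of_int m *\<^sub>R b)"

definition rational_polytope :: "(real^'n) set \<Rightarrow> bool" where
  "rational_polytope P \<longleftrightarrow> (\<exists>S. finite S \<and> (\<forall>x\<in>S. rational_pt x) \<and> P = convex hull S)"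

definition full_dim :: "(real^'n) set \<Rightarrow> bool" where
  "full_dim P \<longleftrightarrow> aff_dim P = int CARD('n)"

definition facet_ineq :: "(real^'n) set \<Rightarrow> real^'n \<Rightarrow> real \<Rightarrow> bool" where
  "facet_ineq R a b \<longleftrightarrow> primitive a \<and> (\<forall>x\<in>R. a \<bullet> x \<ge> b) \<and>
     {x \<in> R. a \<bullet> x = b} facet_of R"

definition lattice_dist :: "(real^'n) set \<Rightarrow> real^'n \<Rightarrow> real" where
  "lattice_dist R x = Min {a \<bullet> x - b | a b. facet_ineq R a b}"

definition ray_gens :: "(real^'n) set \<Rightarrow> (real^'n) set" where
  "ray_gens \<sigma> = {v. primitive v \<and> {t *\<^sub>R v | t. t \<ge> 0} face_of \<sigma>}"

definition height :: "(real^'n) set \<Rightarrow> real^'n \<Rightarrow> real" where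
  "height \<sigma> y = Sup {(\<Sum>v\<in>ray_gens \<sigma>. c v) | c.
       (\<forall>v\<in>ray_gens \<sigma>. c v \<ge> 0) \<and> (\<Sum>v\<in>ray_gens \<sigma>. c v *\<^sub>R v) = y}"

definition alpha_canonical_cone :: "real \<Rightarrow> (real^'n) set \<Rightarrow> bool" where
  "alpha_canonical_cone \<alpha> \<sigma> \<longleftrightarrow>
     (\<forall>y\<in>\<sigma>. lattice_pt y \<and> y \<noteq> 0 \<longrightarrow> height \<sigma> y \<ge> \<alpha>)"

definition normal_cone :: "(real^'n) set \<Rightarrow> (real^'n) set \<Rightarrow> (real^'n) set" where
  "normal_cone P F = {u. \<forall>y\<in>F. \<forall>z\<in>P. u \<bullet> y \<le> u \<bullet> z}"

definition normal_fan :: "(real^'n) set \<Rightarrow> (real^'n) set set" where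
  "normal_fan P = {normal_cone P F | F. F face_of P \<and> F \<noteq> {}}"

definition alpha_canonical_polytope :: "real \<Rightarrow> (real^'n) set \<Rightarrow> bool" where
  "alpha_canonical_polytope \<alpha> P \<longleftrightarrow> (\<forall>\<sigma>\<in>normal_fan P. alpha_canonical_cone \<alpha> \<sigma>)"

end

theory Submission
  imports Defs
begin

lemma lattice_int: "lattice_pt x \<Longrightarrow> x $ i = of_int \<lfloor>x $ i\<rfloor>"
  unfolding lattice_pt_def by (metis Ints_cases floor_of_int)

lemma lattice_inner: "lattice_pt x \<Longrightarrow> lattice_pt y \<Longrightarrow> x \<bullet> y \<in> \<int>"
  unfolding lattice_pt_def inner_vec_def by (auto intro!: Ints_sum Ints_mult)

lemma rat_inner: "rational_pt x \<Longrightarrow> rational_pt y \<Longrightarrow> x \<bullet> y \<in> \<rat>"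
  unfolding rational_pt_def inner_vec_def by (auto intro!: Rats_sum Rats_mult)

lemma rat_add: "rational_pt x \<Longrightarrow> rational_pt y \<Longrightarrow> rational_pt (x + y)"
  unfolding rational_pt_def by (auto intro!: Rats_add)

lemma rat_diff: "rational_pt x \<Longrightarrow> rational_pt y \<Longrightarrow> rational_pt (x - y)"
  unfolding rational_pt_def by (auto intro!: Rats_diff)

lemma rat_scale: "c \<in> \<rat> \<Longrightarrow> rational_pt y \<Longrightarrow> rational_pt (c *\<^sub>R y)"
  unfolding rational_pt_def by (auto intro!: Rats_mult)

lemma rat_zero: "rational_pt 0"
  unfolding rational_pt_def by auto

lemma rat_sum: "(\<And>x. x \<in> A \<Longrightarrow> rational_pt (f x)) \<Longrightarrow> rational_pt (sum f A)"
  unfolding rational_pt_def by (auto simp: sum_component intro!: Rats_sum)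

lemma rat_sum_list: "(\<And>x. x \<in> set xs \<Longrightarrow> rational_pt x) \<Longrightarrow> rational_pt (sum_list xs)"
  by (induction xs) (auto intro: rat_add rat_zero)

lemma lattice_rat: "lattice_pt x \<Longrightarrow> rational_pt x"
  unfolding lattice_pt_def rational_pt_def using Ints_subset_Rats by blast

lemma rat_axis: "rational_pt (axis i (1::real))"
  unfolding rational_pt_def axis_def by auto

lemma lattice_axis: "lattice_pt (axis i (1::real))"
  unfolding lattice_pt_def axis_def by auto

lemma rat_scale_lattice:
  assumes "rational_pt r"
  shows "\<exists>m::int. m > 0 \<and> lattice_pt (of_int m *\<^sub>R r)"
proof -
  have "\<forall>i. \<exists>ab. snd ab > (0::int) \<and> r $ i = of_int (fst ab) / of_int (snd ab)"
    using assms unfolding rational_pt_def by (metis Rats_cases' fst_conv snd_conv)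
  then obtain f where f: "\<And>i. snd (f i) > 0 \<and> r $ i = of_int (fst (f i)) / of_int (snd (f i))"
    by metis
  define m where "m = (\<Prod>i\<in>UNIV. snd (f i))"
  have "m > 0" unfolding m_def using f by (simp add: prod_pos)
  moreover have "lattice_pt (of_int m *\<^sub>R r)"
    unfolding lattice_pt_def
  proof
    fix i
    have "m = snd (f i) * (\<Prod>j\<in>UNIV-{i}. snd (f j))"
      unfolding m_def by (simp add: prod.remove)
    then have "of_int m * r $ i = of_int (fst (f i) * (\<Prod>j\<in>UNIV-{i}. snd (f j)))"
      using f[of i] by (simp add: field_simps)
    then have "of_int m * r $ i \<in> \<int>" by (metis Ints_of_int)
    then show "(of_int m *\<^sub>R r) $ i \<in> \<int>" by simp
  qed
  ultimately show ?thesis by blast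
qed

lemma lattice_primitive:
  assumes "lattice_pt z" "z \<noteq> 0"
  shows "\<exists>v t. primitive v \<and> t > 0 \<and> z = t *\<^sub>R v"
proof -
  obtain i where i: "z $ i \<noteq> 0" using assms(2) by (metis vec_eq_iff zero_index)
  define K where "K = {k::nat. k \<ge> 1 \<and> lattice_pt ((1 / real k) *\<^sub>R z)}"
  have bound: "k \<le> nat \<lfloor>\<bar>z $ i\<bar>\<rfloor>" if "k \<in> K" for k
  proof -
    have k1: "k \<ge> 1" and l: "lattice_pt ((1 / real k) *\<^sub>R z)" using that K_def by auto
    then have "((1 / real k) *\<^sub>R z) $ i \<in> \<int>" unfolding lattice_pt_def by blast
    then have "z $ i / real k \<in> \<int>" by simp
    moreover have "z $ i / real k \<noteq> 0" using i k1 by simp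
    ultimately have "\<bar>z $ i / real k\<bar> \<ge> 1" by (metis Ints_nonzero_abs_ge1)
    then have "\<bar>z $ i\<bar> \<ge> real k" using k1 by (simp add: field_simps)
    moreover have "\<bar>z $ i\<bar> \<in> \<int>" using assms(1) unfolding lattice_pt_def by auto
    ultimately have "real k \<le> of_int \<lfloor>\<bar>z $ i\<bar>\<rfloor>" by (metis Ints_cases floor_of_int)
    then have "int k \<le> \<lfloor>\<bar>z $ i\<bar>\<rfloor>" by linarith
    then show ?thesis by linarith
  qed
  have fin: "finite K" by (rule finite_subset[of _ "{..nat \<lfloor>\<bar>z $ i\<bar>\<rfloor>}"]) (use bound in auto)
  have "1 \<in> K" using assms(1) unfolding K_def by simp
  then have ne: "K \<noteq> {}" by auto
  define k where "k = Max K"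
  have kK: "k \<in> K" unfolding k_def using fin ne by simp
  have kmax: "\<And>j. j \<in> K \<Longrightarrow> j \<le> k" unfolding k_def using fin by simp
  have k1: "k \<ge> 1" using kK K_def by auto
  define v where "v = (1 / real k) *\<^sub>R z"
  have lv: "lattice_pt v" using kK K_def v_def by auto
  have v0: "v \<noteq> 0" using assms(2) k1 v_def by auto
  have "primitive v"
    unfolding primitive_def
  proof (intro conjI lv v0 notI)
    assume "\<exists>(m::int) b. m > 1 \<and> lattice_pt b \<and> v = of_int m *\<^sub>R b"
    then obtain m b where m: "m > 1" "lattice_pt b" "v = of_int m *\<^sub>R b" by blast
    have zk: "z = real k *\<^sub>R v" using k1 v_def by simp
    have rk: "real (k * nat m) = real k * of_int m" using m by simp
    have "z = (real k * of_int m) *\<^sub>R b" using zk m(3) by simp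
    then have "(1 / real (k * nat m)) *\<^sub>R z = b"
      using m k1 rk by simp
    then have "k * nat m \<in> K" unfolding K_def using m k1 by auto
    then have le: "k * nat m \<le> k" by (rule kmax)
    have "nat m \<ge> 2" using m by linarith
    then have "k * nat m \<ge> k * 2" by simp
    then show False using k1 le by linarith
  qed
  moreover have "z = real k *\<^sub>R v" using k1 v_def by simp
  ultimately show ?thesis using k1 by (intro exI[of _ v] exI[of _ "real k"]) auto
qed

lemma primitive_unique:
  assumes pv: "primitive v" and pw: "primitive w" and t: "t > 0" and wt: "w = t *\<^sub>R v"
  shows "t = 1"
proof -
  have lv: "lattice_pt v" and lw: "lattice_pt w" using pv pw primitive_def by auto
  obtain i where i: "v $ i \<noteq> 0" using pv unfolding primitive_def by (metis vec_eq_iff zero_index)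
  have "t = w $ i / v $ i" using wt i by simp
  moreover have "w $ i / v $ i \<in> \<rat>" using lv lw unfolding lattice_pt_def
    using Ints_subset_Rats by (meson Rats_divide subsetD)
  ultimately obtain p q :: int where pq: "q > 0" "coprime p q" "t = of_int p / of_int q"
    by (metis Rats_cases')
  have p0: "p > 0" using pq t by (simp add: zero_less_divide_iff)
  define W where "W j = \<lfloor>w $ j\<rfloor>" for j
  define V where "V j = \<lfloor>v $ j\<rfloor>" for j
  have Wj: "w $ j = of_int (W j)" for j using lw lattice_int W_def by metis
  have Vj: "v $ j = of_int (V j)" for j using lv lattice_int V_def by metis
  have eq: "q * W j = p * V j" for j
  proof -
    have "w $ j = t * v $ j" using wt by simp
    then have "of_int q * w $ j = of_int p * v $ j" using pq by (simp add: field_simps)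
    then show ?thesis using Wj Vj by (metis of_int_eq_iff of_int_mult)
  qed
  have "p dvd W j" for j
  proof -
    have "p dvd q * W j" using eq by simp
    then show ?thesis using pq(2) by (metis coprime_commute coprime_dvd_mult_right_iff)
  qed
  then have "\<forall>j. \<exists>c. W j = p * c" by (auto simp: dvd_def)
  then obtain c where c: "\<And>j. W j = p * c j" by metis
  have "w = of_int p *\<^sub>R (\<chi> j. of_int (c j))"
    by (simp add: vec_eq_iff Wj c)
  moreover have "lattice_pt ((\<chi> j. of_int (c j)) :: real^'a)" unfolding lattice_pt_def by simp
  ultimately have "\<not> p > 1" using pw unfolding primitive_def by blast
  then have p1: "p = 1" using p0 by simp
  have "q dvd V j" for j
  proof -
    have "q dvd p * V j" using eq by (metis dvd_triv_left)
    then show ?thesis using pq(2) by (metis coprime_commute coprime_dvd_mult_left_iff coprime_dvd_mult_right_iff)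
  qed
  then have "\<forall>j. \<exists>c. V j = q * c" by (auto simp: dvd_def)
  then obtain d where d: "\<And>j. V j = q * d j" by metis
  have "v = of_int q *\<^sub>R (\<chi> j. of_int (d j))"
    by (simp add: vec_eq_iff Vj d)
  moreover have "lattice_pt ((\<chi> j. of_int (d j)) :: real^'a)" unfolding lattice_pt_def by simp
  ultimately have "\<not> q > 1" using pv unfolding primitive_def by blast
  then have "q = 1" using pq by simp
  then show ?thesis using p1 pq by simp
qed

definition proj :: "(real^'n) list \<Rightarrow> real^'n \<Rightarrow> real^'n" where
  "proj us w = sum_list (map (\<lambda>u. ((w \<bullet> u) / (u \<bullet> u)) *\<^sub>R u) us)"

fun gs :: "(real^'n) list \<Rightarrow> (real^'n) list" where
  "gs [] = []"
| "gs (w # ws) = (w - proj (gs ws) w) # gs ws"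

lemma proj_Nil[simp]: "proj [] w = 0" by (simp add: proj_def)
lemma proj_Cons[simp]: "proj (x # xs) w = ((w \<bullet> x) / (x \<bullet> x)) *\<^sub>R x + proj xs w"
  by (simp add: proj_def)

lemma proj_orth_zero: "(\<forall>y\<in>set xs. y \<bullet> u' = 0) \<Longrightarrow> proj xs w \<bullet> u' = 0"
  by (induction xs) (auto simp: inner_add_left)

lemma proj_orth:
  "sorted_wrt (\<lambda>x y. x \<bullet> y = 0) us \<Longrightarrow> u' \<in> set us \<Longrightarrow> proj us w \<bullet> u' = w \<bullet> u'"
proof (induction us)
  case Nil then show ?case by simp
next
  case (Cons x xs)
  show ?case
  proof (cases "u' = x")
    case True
    show ?thesis
    proof (cases "x = 0")
      case True then show ?thesis using \<open>u' = x\<close> by simp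
    next
      case False
      have "\<forall>y\<in>set xs. y \<bullet> u' = 0" using Cons.prems True by (auto simp: inner_commute)
      then have "proj xs w \<bullet> u' = 0" by (rule proj_orth_zero)
      then show ?thesis using True False by (simp add: inner_add_left)
    qed
  next
    case False
    then have "u' \<in> set xs" "x \<bullet> u' = 0" using Cons.prems by auto
    then show ?thesis using Cons by (simp add: inner_add_left)
  qed
qed

lemma gs_orth: "sorted_wrt (\<lambda>x y. x \<bullet> y = 0) (gs ws)"
  by (induction ws) (auto simp: inner_diff_left proj_orth)

lemma proj_rat: "(\<And>u. u \<in> set us \<Longrightarrow> rational_pt u) \<Longrightarrow> rational_pt w \<Longrightarrow> rational_pt (proj us w)"
  by (induction us) (auto intro!: rat_add rat_scale rat_zero Rats_divide rat_inner)

lemma gs_rat: "(\<And>u. u \<in> set ws \<Longrightarrow> rational_pt u) \<Longrightarrow> u \<in> set (gs ws) \<Longrightarrow> rational_pt u"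
  by (induction ws arbitrary: u) (auto intro!: rat_diff proj_rat)

lemma proj_span: "proj us w \<in> span (set us)"
proof (induction us)
  case Nil then show ?case by (simp add: span_zero)
next
  case (Cons a us)
  have "proj us w \<in> span (set (a#us))" using Cons.IH span_mono[of "set us" "set (a#us)"] by auto
  moreover have "((w \<bullet> a) / (a \<bullet> a)) *\<^sub>R a \<in> span (set (a#us))" by (intro span_mul span_base) simp
  ultimately show ?case by (simp add: span_add)
qed

lemma gs_span: "span (set (gs ws)) = span (set ws)"
proof (induction ws)
  case Nil then show ?case by simp
next
  case (Cons w ws)
  have "span (set (gs (w # ws))) = span (insert (w - proj (gs ws) w) (set (gs ws)))" by simp
  also have "\<dots> = span (insert w (set (gs ws)))"
    by (rule eq_span_insert_eq) (simp add: span_neg proj_span)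
  also have "\<dots> = span (insert w (set ws))"
    unfolding span_insert Cons.IH ..
  finally show ?case by simp
qed

lemma orth_span: "(\<And>u. u \<in> A \<Longrightarrow> r \<bullet> u = 0) \<Longrightarrow> x \<in> span A \<Longrightarrow> r \<bullet> x = 0"
  by (metis orthogonal_def orthogonal_to_span)

lemma rat_orth:
  fixes D :: "(real^'n) set"
  assumes "finite D" "\<And>d. d \<in> D \<Longrightarrow> rational_pt d" "span D \<noteq> UNIV"
  shows "\<exists>r. rational_pt r \<and> r \<noteq> 0 \<and> (\<forall>d\<in>D. r \<bullet> d = 0)"
proof -
  obtain ws where ws: "set ws = D" using assms(1) finite_list by blast
  define us where "us = gs ws"
  have "span (set us) = span (set ws)" unfolding us_def by (rule gs_span)
  then have spus: "span (set us) = span D" using ws by simp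
  have "\<exists>i. axis i (1::real) \<notin> span D"
  proof (rule ccontr)
    assume "\<not> ?thesis"
    then have "(Basis :: (real^'n) set) \<subseteq> span D" by (auto simp: Basis_vec_def)
    then have "span (Basis :: (real^'n) set) \<subseteq> span D" by (metis span_mono span_span)
    then show False using assms(3) by (simp add: span_Basis top.extremum_unique)
  qed
  then obtain i where i: "axis i (1::real) \<notin> span D" by blast
  define e where "e = (axis i (1::real) :: real^'n)"
  define r where "r = e - proj us e"
  have "r \<bullet> u = 0" if "u \<in> set us" for u
    using proj_orth[OF gs_orth that[unfolded us_def], of e] that by (simp add: r_def inner_diff_left us_def)
  then have "r \<bullet> d = 0" if "d \<in> D" for d
    using orth_span[of "set us" r d] that spus span_base by blast
  moreover have "r \<noteq> 0"
  proof
    assume "r = 0"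
    then have "e \<in> span (set us)" using proj_span[of us e] r_def by simp
    then show False using i spus e_def by simp
  qed
  moreover have "rational_pt r"
    unfolding r_def e_def using gs_rat assms(2) ws us_def
    by (auto intro!: rat_diff rat_axis proj_rat)
  ultimately show ?thesis by blast
qed

lemma orth_parallel:
  fixes a c :: "'a::real_inner"
  assumes "a \<noteq> 0" "\<And>d. a \<bullet> d = 0 \<Longrightarrow> c \<bullet> d = 0"
  shows "c = ((c \<bullet> a) / (a \<bullet> a)) *\<^sub>R a"
proof -
  define k where "k = (c \<bullet> a) / (a \<bullet> a)"
  define e where "e = c - k *\<^sub>R a"
  have aa: "a \<bullet> a \<noteq> 0" using assms(1) by simp
  have "a \<bullet> e = a \<bullet> c - k * (a \<bullet> a)" unfolding e_def by (simp add: inner_diff_right)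
  also have "k * (a \<bullet> a) = c \<bullet> a" unfolding k_def using aa by simp
  finally have ae: "a \<bullet> e = 0" by (simp add: inner_commute)
  then have ce: "c \<bullet> e = 0" using assms(2) by blast
  have "e \<bullet> e = c \<bullet> e - k * (a \<bullet> e)"
    unfolding e_def by (simp add: inner_diff_left)
  then have "e \<bullet> e = 0" using ae ce by simp
  then have "e = 0" by simp
  then show ?thesis unfolding e_def k_def by simp
qed

lemma facet_affine_hull:
  fixes P :: "(real^'n) set"
  assumes fd: "aff_dim P = int CARD('n)" and G: "G facet_of P" and a: "a \<noteq> 0"
    and sub: "G \<subseteq> {x. a \<bullet> x = b}"
  shows "affine hull G = {x. a \<bullet> x = b}"
proof (rule affine_dim_equal)
  show "affine (affine hull G)" by (rule affine_affine_hull)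
  show "affine {x. a \<bullet> x = b}" by (rule affine_hyperplane)
  show "affine hull G \<noteq> {}" using G by (simp add: facet_of_def)
  show "affine hull G \<subseteq> {x. a \<bullet> x = b}" using sub by (intro hull_minimal affine_hyperplane)
  have "aff_dim G = aff_dim P - 1" using G by (simp add: facet_of_def)
  moreover have "aff_dim {x. a \<bullet> x = b} = int CARD('n) - 1" using aff_dim_hyperplane[OF a, of b] by simp
  ultimately show "aff_dim (affine hull G) = aff_dim {x. a \<bullet> x = b}" using fd by simp
qed
lemma not_in_hyperplane:
  fixes P :: "(real^'n) set"
  assumes fd: "aff_dim P = int CARD('n)" and a: "a \<noteq> 0"
  shows "\<exists>p\<in>P. a \<bullet> p \<noteq> b"
proof (rule ccontr)
  assume "\<not> ?thesis"
  then have "P \<subseteq> {x. a \<bullet> x = b}" by auto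
  then have "aff_dim P \<le> aff_dim {x. a \<bullet> x = b}" by (rule aff_dim_subset)
  then show False using fd a by simp
qed

lemma facet_normals_prop:
  fixes P :: "(real^'n) set"
  assumes fd: "aff_dim P = int CARD('n)" and G: "G facet_of P"
    and a: "a \<noteq> 0" and a': "a' \<noteq> 0"
    and va: "\<And>x. x \<in> P \<Longrightarrow> a \<bullet> x \<ge> b" and va': "\<And>x. x \<in> P \<Longrightarrow> a' \<bullet> x \<ge> b'"
    and Ga: "G = P \<inter> {x. a \<bullet> x = b}" and Ga': "G = P \<inter> {x. a' \<bullet> x = b'}"
  shows "\<exists>l>0. a' = l *\<^sub>R a \<and> b' = l * b"
proof -
  have H: "affine hull G = {x. a \<bullet> x = b}" using facet_affine_hull[OF fd G a] Ga by blast
  have H': "affine hull G = {x. a' \<bullet> x = b'}" using facet_affine_hull[OF fd G a'] Ga' by blast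
  obtain x0 where x0: "x0 \<in> G" using G by (auto simp: facet_of_def)
  have ax0: "a \<bullet> x0 = b" and a'x0: "a' \<bullet> x0 = b'" using x0 Ga Ga' by auto
  have "a' \<bullet> d = 0" if "a \<bullet> d = 0" for d
  proof -
    have "a \<bullet> (x0 + d) = b" using ax0 that by (simp add: inner_add_right)
    then have "a' \<bullet> (x0 + d) = b'" using H H' by blast
    then show ?thesis using a'x0 by (simp add: inner_add_right)
  qed
  then have eq: "a' = ((a' \<bullet> a) / (a \<bullet> a)) *\<^sub>R a" by (rule orth_parallel[OF a])
  define l where "l = (a' \<bullet> a) / (a \<bullet> a)"
  have eq': "a' = l *\<^sub>R a" using eq l_def by simp
  have l0: "l \<noteq> 0" using a' eq' by auto
  have bb: "b' = l * b" using a'x0 ax0 eq' by simp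
  obtain p where p: "p \<in> P" "a \<bullet> p \<noteq> b" using not_in_hyperplane[OF fd a] by blast
  have "a \<bullet> p > b" using p va by force
  moreover have "l * (a \<bullet> p) \<ge> l * b" using va'[OF p(1)] eq' bb by simp
  ultimately have "l * (a \<bullet> p - b) \<ge> 0" "a \<bullet> p - b > 0" by (simp_all add: right_diff_distrib)
  then have "l \<ge> 0" by (simp add: zero_le_mult_iff)
  then have "l > 0" using l0 by simp
  then show ?thesis using eq' bb by blast
qed

lemma facet_ineq_facet:
  "facet_ineq P a b \<Longrightarrow> (P \<inter> {x. a \<bullet> x = b}) facet_of P"
proof -
  have "{x \<in> P. a \<bullet> x = b} = P \<inter> {x. a \<bullet> x = b}" by blast
  then show "facet_ineq P a b \<Longrightarrow> (P \<inter> {x. a \<bullet> x = b}) facet_of P"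
    unfolding facet_ineq_def by simp
qed

lemma facet_ineq_unique:
  fixes P :: "(real^'n) set"
  assumes fd: "aff_dim P = int CARD('n)"
    and f: "facet_ineq P a b" and f': "facet_ineq P a' b'"
    and eq: "P \<inter> {x. a \<bullet> x = b} = P \<inter> {x. a' \<bullet> x = b'}"
  shows "a' = a \<and> b' = b"
proof -
  have G: "(P \<inter> {x. a \<bullet> x = b}) facet_of P" using f by (rule facet_ineq_facet)
  have pa: "primitive a" and pa': "primitive a'" using f f' facet_ineq_def by auto
  then have nz: "a \<noteq> 0" and nz': "a' \<noteq> 0" by (auto simp: primitive_def)
  have va: "\<And>x. x \<in> P \<Longrightarrow> a \<bullet> x \<ge> b" using f unfolding facet_ineq_def by blast
  have va': "\<And>x. x \<in> P \<Longrightarrow> a' \<bullet> x \<ge> b'" using f' unfolding facet_ineq_def by blast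
  obtain l where l: "l > 0" "a' = l *\<^sub>R a" "b' = l * b"
    using facet_normals_prop[OF fd G nz nz' va va' refl eq] by blast
  have "l = 1" using primitive_unique[OF pa pa' l(1) l(2)] .
  then show ?thesis using l by simp
qed

lemma finite_facet_ineqs:
  fixes P :: "(real^'n) set"
  assumes fd: "aff_dim P = int CARD('n)" and poly: "polytope P"
  shows "finite {(a, b). facet_ineq P a b}"
proof -
  let ?f = "\<lambda>(a, b). P \<inter> {x. a \<bullet> x = b}"
  have sub: "?f ` {(a, b). facet_ineq P a b} \<subseteq> {F. F facet_of P}"
  proof (rule image_subsetI)
    fix p assume "p \<in> {(a, b). facet_ineq P a b}"
    then show "?f p \<in> {F. F facet_of P}" by (cases p) (simp add: facet_ineq_facet)
  qed
  have ff: "finite {F. F facet_of P}"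
  proof -
    have "{F. F facet_of P} \<subseteq> {F. F face_of P}" unfolding facet_of_def by blast
    then show ?thesis using finite_polytope_faces[OF poly] finite_subset by blast
  qed
  have "finite (?f ` {(a, b). facet_ineq P a b})" using finite_subset[OF sub ff] .
  moreover have "inj_on ?f {(a, b). facet_ineq P a b}"
  proof (rule inj_onI)
    fix p q assume pq: "p \<in> {(a, b). facet_ineq P a b}" "q \<in> {(a, b). facet_ineq P a b}" "?f p = ?f q"
    obtain a b where p: "p = (a, b)" by (cases p)
    obtain a' b' where q: "q = (a', b')" by (cases q)
    have f1: "facet_ineq P a b" using pq(1) p by simp
    have f2: "facet_ineq P a' b'" using pq(2) q by simp
    have e: "P \<inter> {x. a \<bullet> x = b} = P \<inter> {x. a' \<bullet> x = b'}" using pq(3) p q by simp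
    have "a' = a \<and> b' = b" by (rule facet_ineq_unique[OF fd f1 f2 e])
    then show "p = q" using p q by simp
  qed
  ultimately show ?thesis by (rule finite_imageD)
qed

lemma rational_facet:
  fixes P :: "(real^'n) set"
  assumes S: "finite S" "\<And>x. x \<in> S \<Longrightarrow> rational_pt x" and PS: "P = convex hull S"
    and fd: "aff_dim P = int CARD('n)" and G: "G facet_of P"
  shows "\<exists>a b. facet_ineq P a b \<and> G = P \<inter> {x. a \<bullet> x = b}"
proof -
  have poly: "polytope P" using S PS polytope_def by blast
  have "G face_of P" using G facet_of_def by blast
  then have "G exposed_face_of P" using exposed_face_of_polyhedron polytope_imp_polyhedron poly by blast
  then obtain a0 b0 where ab0: "P \<subseteq> {x. a0 \<bullet> x \<le> b0}" "G = P \<inter> {x. a0 \<bullet> x = b0}"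
    unfolding exposed_face_of_def by blast
  have Gne: "G \<noteq> {}" and Gdim: "aff_dim G = aff_dim P - 1" using G facet_of_def by auto
  have a0: "a0 \<noteq> 0"
  proof
    assume "a0 = 0"
    then have "G = P" using ab0 Gne by auto
    then show False using Gdim by simp
  qed
  have Hyp: "affine hull G = {x. a0 \<bullet> x = b0}"
    using facet_affine_hull[OF fd G a0, of b0] ab0 by blast
  obtain S' where S': "S' \<subseteq> S" "G = convex hull S'"
    using face_of_convex_hull_subset[of S G] \<open>G face_of P\<close> PS S(1) finite_imp_compact by blast
  then have "S' \<noteq> {}" using Gne by auto
  then obtain t0 where t0: "t0 \<in> S'" by auto
  define D where "D = (\<lambda>x. -t0 + x) ` (S' - {t0})"
  have aff: "affine hull G = (\<lambda>x. t0 + x) ` span D"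
    unfolding D_def S'(2) affine_hull_convex_hull using affine_hull_span2[OF t0] .
  have finD: "finite D" unfolding D_def using S' S(1) finite_subset by blast
  have ratD: "rational_pt d" if dD: "d \<in> D" for d
  proof -
    obtain x where x: "x \<in> S'" "d = -t0 + x" using dD unfolding D_def by blast
    have "rational_pt x" "rational_pt t0" using x(1) t0 S'(1) S(2) by auto
    then have "rational_pt (x - t0)" by (rule rat_diff)
    then show ?thesis using x(2) by simp
  qed
  have spanD: "span D \<noteq> UNIV"
  proof
    assume "span D = UNIV"
    then have "affine hull G = UNIV" using aff by (metis surj_plus)
    then have "((b0 + 1) / (a0 \<bullet> a0)) *\<^sub>R a0 \<in> {x. a0 \<bullet> x = b0}" using Hyp by blast
    then show False using a0 by simp
  qed
  obtain r where r: "rational_pt r" "r \<noteq> 0" "\<And>d. d \<in> D \<Longrightarrow> r \<bullet> d = 0"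
    using rat_orth[OF finD ratD spanD] by blast
  have a0t0: "a0 \<bullet> t0 = b0" using t0 S' Hyp hull_subset[of G affine] hull_subset[of S' convex] by auto
  have "r \<bullet> d = 0" if "a0 \<bullet> d = 0" for d
  proof -
    have "t0 + d \<in> affine hull G" using Hyp a0t0 that by (simp add: inner_add_right)
    then have "d \<in> span D" using aff by auto
    then show ?thesis using orth_span[of D r d] r(3) by blast
  qed
  then have rl: "r = ((r \<bullet> a0) / (a0 \<bullet> a0)) *\<^sub>R a0" by (rule orth_parallel[OF a0])
  define l where "l = (r \<bullet> a0) / (a0 \<bullet> a0)"
  have l0: "l \<noteq> 0" using r(2) rl l_def by auto
  define r' where "r' = (if l < 0 then r else (-1) *\<^sub>R r)"
  define mu where "mu = (if l < 0 then l else - l)"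
  have rm: "rational_pt ((-1) *\<^sub>R r)" using rat_scale[of "-1" r] r(1) by simp
  have "rational_pt r'" unfolding r'_def using rm r(1) by simp
  moreover have "r' = mu *\<^sub>R a0" "mu < 0"
    using rl l0 unfolding r'_def mu_def l_def[symmetric] by auto
  ultimately have r': "rational_pt r'" "r' = mu *\<^sub>R a0" "mu < 0" by auto
  obtain m :: int where m: "m > 0" "lattice_pt (of_int m *\<^sub>R r')" using rat_scale_lattice[OF r'(1)] by blast
  have "of_int m *\<^sub>R r' \<noteq> 0" using m(1) r'(2,3) a0 by simp
  then obtain v t where vt: "primitive v" "t > 0" "of_int m *\<^sub>R r' = t *\<^sub>R v"
    using lattice_primitive[OF m(2)] by blast
  define c where "c = of_int m * mu / t"
  have c0: "c < 0" unfolding c_def using m(1) r'(3) vt(2) by (simp add: divide_neg_pos mult_pos_neg)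
  have vc: "v = c *\<^sub>R a0"
  proof -
    have "t *\<^sub>R v = of_int m *\<^sub>R r'" using vt(3) by (rule sym)
    also have "\<dots> = of_int m *\<^sub>R (mu *\<^sub>R a0)" using r'(2) by (rule arg_cong)
    also have "\<dots> = (of_int m * mu) *\<^sub>R a0" by (rule scaleR_scaleR)
    finally have tv: "t *\<^sub>R v = (of_int m * mu) *\<^sub>R a0" .
    have "v = (1/t) *\<^sub>R (t *\<^sub>R v)" using vt(2) by simp
    also have "\<dots> = (1/t) *\<^sub>R ((of_int m * mu) *\<^sub>R a0)" using tv by (rule arg_cong)
    also have "\<dots> = c *\<^sub>R a0" unfolding c_def by simp
    finally show ?thesis .
  qed
  have valid: "\<forall>x\<in>P. v \<bullet> x \<ge> c * b0"
    using ab0(1) c0 vc by (auto simp: mult_le_cancel_left_neg)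
  have Geq: "G = P \<inter> {x. v \<bullet> x = c * b0}"
    using ab0(2) c0 vc by auto
  have "{x \<in> P. v \<bullet> x = c * b0} = G" using Geq by blast
  then have "facet_ineq P v (c * b0)"
    unfolding facet_ineq_def using vt(1) valid G by simp
  then show ?thesis using Geq by blast
qed

lemma facet_repr:
  fixes P :: "(real^'n) set"
  assumes S: "finite S" "\<And>x. x \<in> S \<Longrightarrow> rational_pt x" and PS: "P = convex hull S"
    and fd: "aff_dim P = int CARD('n)"
    and z: "\<And>a b. facet_ineq P a b \<Longrightarrow> a \<bullet> z \<ge> b"
  shows "z \<in> P"
proof -
  have poly: "polyhedron P" using S PS polytope_def polytope_imp_polyhedron by blast
  obtain F where F: "finite F" "P = affine hull P \<inter> \<Inter>F"
    "\<forall>h \<in> F. \<exists>a b. a \<noteq> 0 \<and> h = {x. a \<bullet> x \<le> b}"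
    "\<forall>F'. F' \<subset> F \<longrightarrow> P \<subset> affine hull P \<inter> \<Inter>F'"
    using poly polyhedron_Int_affine_minimal by metis
  obtain ah bh where ahbh: "\<And>h. h \<in> F \<Longrightarrow> ah h \<noteq> 0 \<and> h = {x. ah h \<bullet> x \<le> bh h}"
    using F(3) by metis
  have "z \<in> h" if h: "h \<in> F" for h
  proof -
    have fac: "(P \<inter> {x. ah h \<bullet> x = bh h}) facet_of P"
      using facet_of_polyhedron_explicit[OF F(1) F(2) ahbh, of "P \<inter> {x. ah h \<bullet> x = bh h}"] F(4) h by blast
    obtain a b where ab: "facet_ineq P a b" "P \<inter> {x. ah h \<bullet> x = bh h} = P \<inter> {x. a \<bullet> x = b}"
      using rational_facet[OF S PS fd fac] by blast
    have vh: "- ah h \<bullet> x \<ge> - bh h" if "x \<in> P" for x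
      using that F(2) h ahbh[OF h] by auto
    have nz1: "a \<noteq> 0" using ab(1) by (auto simp: facet_ineq_def primitive_def)
    have nz2: "- ah h \<noteq> 0" using ahbh[OF h] by simp
    have va: "\<And>x. x \<in> P \<Longrightarrow> a \<bullet> x \<ge> b" using ab(1) unfolding facet_ineq_def by blast
    have Ga: "P \<inter> {x. ah h \<bullet> x = bh h} = P \<inter> {x. - ah h \<bullet> x = - bh h}" by auto
    obtain l where l: "l > 0" "a = l *\<^sub>R (- ah h)" "b = l * (- bh h)"
      using facet_normals_prop[OF fd fac nz2 nz1 vh va Ga ab(2)] by blast
    have "a \<bullet> z \<ge> b" using z ab(1) .
    then have "l * (- ah h \<bullet> z) \<ge> l * (- bh h)" using l by simp
    then have "ah h \<bullet> z \<le> bh h" using l(1) by (simp add: mult_le_cancel_left_pos)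
    then show ?thesis using ahbh[OF h] by auto
  qed
  moreover have "affine hull P = UNIV" using fd aff_dim_eq_full[of P] by simp
  ultimately show ?thesis using F(2) by blast
qed

definition csum :: "(real^'n) set \<Rightarrow> (real^'n) set" where
  "csum N = {y. \<exists>c. (\<forall>a\<in>N. c a \<ge> 0) \<and> (\<Sum>a\<in>N. c a *\<^sub>R a) = y}"

lemma csum_0: "0 \<in> csum N"
  unfolding csum_def by (rule CollectI, rule exI[of _ "\<lambda>_. 0"]) simp

lemma csum_scale: "x \<in> csum N \<Longrightarrow> t \<ge> 0 \<Longrightarrow> t *\<^sub>R x \<in> csum N"
proof -
  assume x: "x \<in> csum N" and t: "t \<ge> 0"
  obtain c where c: "\<forall>a\<in>N. c a \<ge> 0" "(\<Sum>a\<in>N. c a *\<^sub>R a) = x" using x unfolding csum_def by blast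
  have "(\<Sum>a\<in>N. (t * c a) *\<^sub>R a) = (\<Sum>a\<in>N. t *\<^sub>R (c a *\<^sub>R a))" by (simp only: scaleR_scaleR)
  also have "\<dots> = t *\<^sub>R (\<Sum>a\<in>N. c a *\<^sub>R a)" by (rule scaleR_sum_right[symmetric])
  also have "\<dots> = t *\<^sub>R x" using c(2) by (simp only:)
  finally have eq: "(\<Sum>a\<in>N. (t * c a) *\<^sub>R a) = t *\<^sub>R x" .
  have nn: "\<forall>a\<in>N. t * c a \<ge> 0"
  proof (rule ballI)
    fix a assume aN: "a \<in> N"
    have ca: "0 \<le> c a" using c(1) aN by (rule bspec)
    show "0 \<le> t * c a" by (rule mult_nonneg_nonneg[OF t ca])
  qed
  show ?thesis unfolding csum_def by (rule CollectI, rule exI[of _ "\<lambda>a. t * c a"], rule conjI[OF nn eq])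
qed

lemma csum_add: "x \<in> csum N \<Longrightarrow> y \<in> csum N \<Longrightarrow> x + y \<in> csum N"
proof -
  assume x: "x \<in> csum N" and y: "y \<in> csum N"
  obtain c where c: "\<forall>a\<in>N. c a \<ge> 0" "(\<Sum>a\<in>N. c a *\<^sub>R a) = x" using x unfolding csum_def by blast
  obtain d where d: "\<forall>a\<in>N. d a \<ge> 0" "(\<Sum>a\<in>N. d a *\<^sub>R a) = y" using y unfolding csum_def by blast
  have nn: "\<forall>a\<in>N. c a + d a \<ge> 0"
  proof (rule ballI)
    fix a assume aN: "a \<in> N"
    have "0 \<le> c a" "0 \<le> d a" using c(1) d(1) aN by auto
    then show "0 \<le> c a + d a" by (rule add_nonneg_nonneg)
  qed
  have eq: "(\<Sum>a\<in>N. (c a + d a) *\<^sub>R a) = x + y"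
    using c(2) d(2) by (simp only: scaleR_add_left sum.distrib)
  show ?thesis unfolding csum_def by (rule CollectI, rule exI[of _ "\<lambda>a. c a + d a"], rule conjI[OF nn eq])
qed

lemma csum_gen: "finite N \<Longrightarrow> a \<in> N \<Longrightarrow> a \<in> csum N"
proof -
  assume "finite N" "a \<in> N"
  have "(\<Sum>b\<in>N. (if b = a then 1 else 0) *\<^sub>R b) = (\<Sum>b\<in>N. if b = a then a else 0)"
    by (rule sum.cong) auto
  also have "\<dots> = a" using \<open>finite N\<close> \<open>a \<in> N\<close> by (simp add: sum.delta)
  finally have "(\<Sum>b\<in>N. (if b = a then 1 else 0) *\<^sub>R b) = a" .
  moreover have "\<forall>b\<in>N. (0::real) \<le> (if b = a then 1 else 0)" by simp
  ultimately show ?thesis unfolding csum_def by (intro CollectI exI[of _ "\<lambda>b. if b = a then 1 else 0"] conjI)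
qed

lemma csum_convex: "convex (csum N)"
proof (rule convexI)
  fix x y and u v :: real
  assume "x \<in> csum N" "y \<in> csum N" "0 \<le> u" "0 \<le> v" "u + v = 1"
  then show "u *\<^sub>R x + v *\<^sub>R y \<in> csum N" by (intro csum_add csum_scale)
qed

lemma csum_subset_cc: "finite N \<Longrightarrow> csum N \<subseteq> convex_cone hull N"
proof
  fix y assume fin: "finite N" and "y \<in> csum N"
  then obtain c where c: "\<forall>a\<in>N. c a \<ge> 0" "(\<Sum>a\<in>N. c a *\<^sub>R a) = y" unfolding csum_def by blast
  have "\<And>M. M \<subseteq> N \<Longrightarrow> (\<Sum>a\<in>M. c a *\<^sub>R a) \<in> convex_cone hull N"
  proof -
    fix M assume "M \<subseteq> N"
    have "finite M" using fin \<open>M \<subseteq> N\<close> finite_subset by blast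
    then show "(\<Sum>a\<in>M. c a *\<^sub>R a) \<in> convex_cone hull N" using \<open>M \<subseteq> N\<close>
    proof (induction M rule: finite_induct)
      case empty then show ?case by (simp add: convex_cone_hull_contains_0)
    next
      case (insert x M)
      have "c x *\<^sub>R x \<in> convex_cone hull N"
        using insert.prems c(1) by (intro convex_cone_hull_mul hull_inc) auto
      then show ?case using insert by (simp add: convex_cone_hull_add)
    qed
  qed
  then show "y \<in> convex_cone hull N" using c(2) by blast
qed

lemma csum_cc: "finite N \<Longrightarrow> csum N = convex_cone hull N"
proof
  assume fin: "finite N"
  show "csum N \<subseteq> convex_cone hull N" using fin by (rule csum_subset_cc)
  have "convex_cone (csum N)"
    unfolding convex_cone_def conic_def using csum_0 csum_convex csum_scale by blast
  moreover have "N \<subseteq> csum N" using csum_gen fin by blast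
  ultimately show "convex_cone hull N \<subseteq> csum N" by (rule hull_minimal[rotated])
qed

lemma csum_closed: "finite N \<Longrightarrow> closed (csum N)"
  using csum_cc closed_convex_cone_hull by metis

lemma csum_mono: "finite M \<Longrightarrow> M \<subseteq> N \<Longrightarrow> finite N \<Longrightarrow> csum M \<subseteq> csum N"
  using csum_cc hull_mono by metis

lemma csum_sub_cone:
  assumes "finite N" "N \<subseteq> C" "0 \<in> C" "\<And>x y. x \<in> C \<Longrightarrow> y \<in> C \<Longrightarrow> x + y \<in> C"
    "\<And>x t. x \<in> C \<Longrightarrow> t \<ge> 0 \<Longrightarrow> t *\<^sub>R x \<in> C"
  shows "csum N \<subseteq> C"
proof -
  have "convex C" by (rule convexI) (intro assms(4,5))
  then have "convex_cone C" unfolding convex_cone_def conic_def using assms(3,5) by blast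
  then have "convex_cone hull N \<subseteq> C" using assms(2) by (rule hull_minimal[rotated])
  then show ?thesis using csum_cc[OF assms(1)] by simp
qed

lemma nc_add: "x \<in> normal_cone P F \<Longrightarrow> y \<in> normal_cone P F \<Longrightarrow> x + y \<in> normal_cone P F"
  unfolding normal_cone_def by (auto simp: inner_add_left intro: add_mono)

lemma nc_scale: "x \<in> normal_cone P F \<Longrightarrow> t \<ge> 0 \<Longrightarrow> t *\<^sub>R x \<in> normal_cone P F"
  unfolding normal_cone_def by (auto intro: mult_left_mono)

lemma nc_0: "0 \<in> normal_cone P F"
  unfolding normal_cone_def by simp

lemma nc_convex: "convex (normal_cone P F)"
  by (rule convexI) (intro nc_add nc_scale)

lemma nc_closed: "closed (normal_cone P F)"
proof -
  have "normal_cone P F = (\<Inter>y\<in>F. \<Inter>z\<in>P. {u. u \<bullet> (y - z) \<le> 0})"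
    unfolding normal_cone_def by (auto simp: inner_diff_right)
  moreover have "closed (\<Inter>y\<in>F. \<Inter>z\<in>P. {u. u \<bullet> (y - z) \<le> 0})"
    by (intro closed_INT ballI) (simp add: closed_halfspace_le inner_commute[of _ "_ - _"])
  ultimately show ?thesis by simp
qed

lemma face_mid:
  assumes T: "T face_of C" and x: "x \<in> T" and p: "p \<in> C" and q: "q \<in> C"
    and xpq: "x = (1/2) *\<^sub>R p + (1/2) *\<^sub>R q"
  shows "p \<in> T"
proof (cases "p = q")
  case True
  then have "x = p" using xpq by (simp only: scaleR_add_left[symmetric]) simp
  then show ?thesis using x by simp
next
  case False
  have "x \<in> open_segment p q"
    unfolding in_segment(2) using False xpq by (intro conjI exI[of _ "1/2"]) auto
  then show ?thesis using T p q x unfolding face_of_def by blast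
qed

lemma ray_face_gen:
  fixes N C :: "(real^'n) set"
  assumes finN: "finite N" and NC: "N \<subseteq> C" and N0: "0 \<notin> N" and C0: "0 \<in> C"
    and Cadd: "\<And>x y. x \<in> C \<Longrightarrow> y \<in> C \<Longrightarrow> x + y \<in> C"
    and Cscale: "\<And>x t. x \<in> C \<Longrightarrow> t \<ge> 0 \<Longrightarrow> t *\<^sub>R x \<in> C"
    and x: "x \<in> csum N" "x \<noteq> 0"
    and R: "{t *\<^sub>R x | t. t \<ge> 0} face_of C"
  shows "\<exists>a\<in>N. \<exists>s>0. a = s *\<^sub>R x"
proof -
  obtain c where c: "\<forall>a\<in>N. c a \<ge> 0" "(\<Sum>a\<in>N. c a *\<^sub>R a) = x" using x(1) unfolding csum_def by blast
  have "\<exists>a\<in>N. c a > 0"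
  proof (rule ccontr)
    assume "\<not> ?thesis"
    then have "\<forall>a\<in>N. c a = 0" using c(1) by force
    then have "(\<Sum>a\<in>N. c a *\<^sub>R a) = 0" by simp
    then show False using c(2) x(2) by simp
  qed
  then obtain a0 where a0: "a0 \<in> N" "c a0 > 0" by blast
  define r where "r = (\<Sum>a\<in>N-{a0}. c a *\<^sub>R a)"
  have xr: "x = c a0 *\<^sub>R a0 + r" unfolding r_def c(2)[symmetric] using finN a0(1) by (rule sum.remove)
  define c' where "c' = c(a0 := 0)"
  have "(\<Sum>a\<in>N. c' a *\<^sub>R a) = c' a0 *\<^sub>R a0 + (\<Sum>a\<in>N-{a0}. c' a *\<^sub>R a)"
    using finN a0(1) by (rule sum.remove)
  also have "\<dots> = (\<Sum>a\<in>N-{a0}. c' a *\<^sub>R a)" unfolding c'_def by simp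
  also have "\<dots> = r" unfolding r_def c'_def by (rule sum.cong) auto
  finally have c'r: "(\<Sum>a\<in>N. c' a *\<^sub>R a) = r" .
  have "\<forall>a\<in>N. c' a \<ge> 0" unfolding c'_def using c(1) by simp
  then have rN: "r \<in> csum N" unfolding csum_def using c'r by blast
  have rC: "r \<in> C" using csum_sub_cone[OF finN NC C0 Cadd Cscale] rN by blast
  define p where "p = (2 * c a0) *\<^sub>R a0"
  define q where "q = 2 *\<^sub>R r"
  have pC: "p \<in> C" unfolding p_def using NC a0 by (intro Cscale) auto
  have qC: "q \<in> C" unfolding q_def using rC by (intro Cscale) auto
  have xpq: "x = (1/2) *\<^sub>R p + (1/2) *\<^sub>R q" unfolding p_def q_def xr by simp
  have xR: "x \<in> {t *\<^sub>R x | t. t \<ge> 0}" by (rule CollectI, rule exI[of _ 1]) simp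
  have "p \<in> {t *\<^sub>R x | t. t \<ge> 0}" by (rule face_mid[OF R xR pC qC xpq])
  then obtain s where s: "s \<ge> 0" "p = s *\<^sub>R x" by blast
  have a00: "a0 \<noteq> 0" using a0(1) N0 by blast
  have "p \<noteq> 0" unfolding p_def using a0(2) a00 by simp
  then have s0: "s > 0" using s by (cases "s = 0") auto
  have "a0 = (1 / (2 * c a0)) *\<^sub>R p" unfolding p_def using a0(2) by simp
  also have "\<dots> = (s / (2 * c a0)) *\<^sub>R x" using s(2) by simp
  finally have "a0 = (s / (2 * c a0)) *\<^sub>R x" .
  moreover have "s / (2 * c a0) > 0" using s0 a0(2) by simp
  ultimately show ?thesis using a0(1) by blast
qed

lemma ext_ray_face:
  fixes C :: "(real^'n) set"
  assumes Cscale: "\<And>x t. x \<in> C \<Longrightarrow> t \<ge> 0 \<Longrightarrow> t *\<^sub>R x \<in> C"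
    and pos: "\<And>g. g \<in> C \<Longrightarrow> g \<noteq> 0 \<Longrightarrow> w \<bullet> g > 0"
    and e: "e extreme_point_of (C \<inter> {g. w \<bullet> g = 1})"
  shows "{t *\<^sub>R e | t. t \<ge> 0} face_of C"
proof -
  let ?T = "{t *\<^sub>R e | t. t \<ge> 0}"
  have eC: "e \<in> C" and we: "w \<bullet> e = 1" using e unfolding extreme_point_of_def by auto
  have ext: "\<And>a b. a \<in> C \<Longrightarrow> w \<bullet> a = 1 \<Longrightarrow> b \<in> C \<Longrightarrow> w \<bullet> b = 1 \<Longrightarrow> e \<notin> open_segment a b"
    using e unfolding extreme_point_of_def by blast
  have inT: "\<And>y s. s \<ge> 0 \<Longrightarrow> y = s *\<^sub>R e \<Longrightarrow> y \<in> ?T" by blast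
  have sub: "?T \<subseteq> C" using eC Cscale by blast
  have cvx: "convex ?T"
  proof (rule convexI)
    fix x y and u v :: real
    assume "x \<in> ?T" "y \<in> ?T" "0 \<le> u" "0 \<le> v" "u + v = 1"
    then obtain s1 s2 where "s1 \<ge> 0" "x = s1 *\<^sub>R e" "s2 \<ge> 0" "y = s2 *\<^sub>R e" by blast
    then have "u *\<^sub>R x + v *\<^sub>R y = (u * s1 + v * s2) *\<^sub>R e" "u * s1 + v * s2 \<ge> 0"
      using \<open>0 \<le> u\<close> \<open>0 \<le> v\<close> by (simp_all add: scaleR_add_left)
    then show "u *\<^sub>R x + v *\<^sub>R y \<in> ?T" by blast
  qed
  have seg: "p \<in> ?T \<and> q \<in> ?T" if p: "p \<in> C" and q: "q \<in> C" and x: "x \<in> ?T" and xs: "x \<in> open_segment p q" for p q x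
  proof -
    obtain t where t: "t \<ge> 0" "x = t *\<^sub>R e" using x by blast
    obtain u where u: "p \<noteq> q" "0 < u" "u < 1" "x = (1 - u) *\<^sub>R p + u *\<^sub>R q"
      using xs unfolding in_segment(2) by blast
    show ?thesis
    proof (cases "p = 0")
      case True
      then have "x = u *\<^sub>R q" using u(4) by simp
      then have xq: "x = u *\<^sub>R q" .
      have "q = (1/u) *\<^sub>R (u *\<^sub>R q)" using u(2) by simp
      also have "\<dots> = (1/u) *\<^sub>R x" using xq by simp
      also have "\<dots> = (t / u) *\<^sub>R e" using t(2) by simp
      finally have "q = (t / u) *\<^sub>R e" .
      moreover have "t / u \<ge> 0" using t(1) u(2) by simp
      ultimately have "q \<in> ?T" by blast
      moreover have "p \<in> ?T" using True inT[of 0 p] by simp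
      ultimately show ?thesis by blast
    next
      case pn: False
      show ?thesis
      proof (cases "q = 0")
        case True
        then have "x = (1 - u) *\<^sub>R p" using u(4) by simp
        then have xp: "x = (1 - u) *\<^sub>R p" .
        have "p = (1/(1 - u)) *\<^sub>R ((1 - u) *\<^sub>R p)" using u(3) by simp
        also have "\<dots> = (1/(1 - u)) *\<^sub>R x" using xp by simp
        also have "\<dots> = (t / (1 - u)) *\<^sub>R e" using t(2) by simp
        finally have "p = (t / (1 - u)) *\<^sub>R e" .
        moreover have "t / (1 - u) \<ge> 0" using t(1) u(3) by simp
        ultimately have "p \<in> ?T" by blast
        moreover have "q \<in> ?T" using True inT[of 0 q] by simp
        ultimately show ?thesis by blast
      next
        case qn: False
        define wp where "wp = w \<bullet> p"
        define wq where "wq = w \<bullet> q"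
        have wp: "wp > 0" unfolding wp_def using pos p pn by blast
        have wq: "wq > 0" unfolding wq_def using pos q qn by blast
        define m where "m = (1 - u) * wp + u * wq"
        have m: "m > 0" unfolding m_def using wp wq u(2,3) by (simp add: add_pos_pos)
        have "w \<bullet> x = m" unfolding m_def wp_def wq_def u(4) by (simp add: inner_add_right)
        moreover have "w \<bullet> x = t" using t(2) we by simp
        ultimately have tm: "t = m" by simp
        define p' where "p' = (1 / wp) *\<^sub>R p"
        define q' where "q' = (1 / wq) *\<^sub>R q"
        have p'C: "p' \<in> C" unfolding p'_def using p wp by (intro Cscale) auto
        have q'C: "q' \<in> C" unfolding q'_def using q wq by (intro Cscale) auto
        have wp': "w \<bullet> p' = 1" unfolding p'_def wp_def using wp wp_def by simp
        have wq': "w \<bullet> q' = 1" unfolding q'_def wq_def using wq wq_def by simp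
        define th where "th = u * wq / m"
        have th: "0 < th" "th < 1" unfolding th_def using m wp wq u(2,3)
          by (simp_all add: m_def field_simps)
        have pp: "p = wp *\<^sub>R p'" unfolding p'_def using wp by simp
        have qq: "q = wq *\<^sub>R q'" unfolding q'_def using wq by simp
        have "e = (1 / t) *\<^sub>R x" using t(2) tm m by simp
        also have "\<dots> = (1 / m) *\<^sub>R ((1 - u) *\<^sub>R (wp *\<^sub>R p') + u *\<^sub>R (wq *\<^sub>R q'))"
          using tm u(4) pp qq by simp
        also have "\<dots> = ((1 - u) * wp / m) *\<^sub>R p' + (u * wq / m) *\<^sub>R q'"
          by (simp add: scaleR_add_right)
        also have "(1 - u) * wp / m = 1 - th" unfolding th_def m_def using m m_def by (simp add: field_simps)
        finally have eth: "e = (1 - th) *\<^sub>R p' + th *\<^sub>R q'" unfolding th_def by simp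
        have "p' = q'"
        proof (rule ccontr)
          assume "p' \<noteq> q'"
          then have "e \<in> open_segment p' q'" unfolding in_segment(2) using th eth by blast
          then show False using ext[OF p'C wp' q'C wq'] by blast
        qed
        then have "e = p'" using eth by (simp add: scaleR_add_left[symmetric])
        then have pe: "p = wp *\<^sub>R e" and qe: "q = wq *\<^sub>R e" using pp qq \<open>p' = q'\<close> by simp_all
        have "p \<in> ?T" by (rule inT[OF less_imp_le[OF wp] pe])
        moreover have "q \<in> ?T" by (rule inT[OF less_imp_le[OF wq] qe])
        ultimately show ?thesis by blast
      qed
    qed
  qed
  show ?thesis unfolding face_of_def using sub cvx seg by blast
qed

lemma farkas:
  fixes P :: "(real^'n) set"
  assumes S: "finite S" "\<And>x. x \<in> S \<Longrightarrow> rational_pt x" and PS: "P = convex hull S"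
    and fd: "aff_dim P = int CARD('n)"
    and F: "F face_of P" "F \<noteq> {}"
    and g: "g \<in> normal_cone P F"
    and N_def: "N = {a. \<exists>b. facet_ineq P a b \<and> (\<forall>y\<in>F. a \<bullet> y = b)}"
  shows "g \<in> csum N"
proof (rule ccontr)
  assume gN: "g \<notin> csum N"
  have poly: "polytope P" using S PS polytope_def by blast
  have cvxP: "convex P" using PS by simp
  define T where "T = {(a, b). facet_ineq P a b}"
  have finT: "finite T" unfolding T_def using finite_facet_ineqs[OF fd poly] .
  have "N \<subseteq> fst ` T" unfolding N_def T_def by force
  then have finN: "finite N" using finT finite_surj by blast
  obtain w \<beta> where wb: "w \<bullet> g < \<beta>" "\<forall>x\<in>csum N. w \<bullet> x > \<beta>"
    using separating_hyperplane_closed_point[OF csum_convex csum_closed[OF finN] gN] by blast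
  have b0: "\<beta> < 0" using wb(2) csum_0[of N] by force
  have wa: "w \<bullet> a \<ge> 0" if aN: "a \<in> N" for a
  proof (rule ccontr)
    assume "\<not> w \<bullet> a \<ge> 0"
    then have neg: "w \<bullet> a < 0" by simp
    define s where "s = \<beta> / (w \<bullet> a)"
    have s: "s \<ge> 0" unfolding s_def using neg b0 by (simp add: zero_le_divide_iff)
    have "s *\<^sub>R a \<in> csum N" by (rule csum_scale[OF csum_gen[OF finN aN] s])
    then have "w \<bullet> (s *\<^sub>R a) > \<beta>" using wb(2) by blast
    moreover have "w \<bullet> (s *\<^sub>R a) = \<beta>" unfolding s_def using neg by simp
    ultimately show False by simp
  qed
  have "rel_interior F \<noteq> {}" using F face_of_imp_convex rel_interior_eq_empty by blast
  then obtain y where yri: "y \<in> rel_interior F" by blast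
  have yF: "y \<in> F" using yri rel_interior_subset by blast
  have FP: "F \<subseteq> P" using F(1) face_of_imp_subset by blast
  have yP: "y \<in> P" using yF FP by blast
  have tight: "w \<bullet> a \<ge> 0" if fab: "facet_ineq P a b" and ay: "a \<bullet> y = b" for a b
  proof -
    have va: "\<And>x. x \<in> P \<Longrightarrow> a \<bullet> x \<ge> b" using fab unfolding facet_ineq_def by blast
    have E: "(P \<inter> {x. a \<bullet> x = b}) face_of P" by (rule face_of_Int_supporting_hyperplane_ge[OF cvxP va])
    have "(P \<inter> {x. a \<bullet> x = b}) \<inter> rel_interior F \<noteq> {}" using yri yP ay by blast
    then have "F \<subseteq> P \<inter> {x. a \<bullet> x = b}" by (rule subset_of_face_of[OF E FP])
    then have "a \<in> N" unfolding N_def using fab by blast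
    then show ?thesis by (rule wa)
  qed
  have ev1: "\<forall>\<^sub>F t in at_right (0::real). \<forall>p\<in>T. fst p \<bullet> y > snd p \<longrightarrow> fst p \<bullet> (y + t *\<^sub>R w) > snd p"
  proof (rule eventually_ball_finite[OF finT], rule ballI)
    fix p assume "p \<in> T"
    show "\<forall>\<^sub>F t in at_right (0::real). fst p \<bullet> y > snd p \<longrightarrow> fst p \<bullet> (y + t *\<^sub>R w) > snd p"
    proof (cases "fst p \<bullet> y > snd p")
      case True
      have "((\<lambda>t. fst p \<bullet> (y + t *\<^sub>R w)) \<longlongrightarrow> fst p \<bullet> (y + 0 *\<^sub>R w)) (at_right (0::real))"
        by (intro tendsto_intros)
      then have "((\<lambda>t. fst p \<bullet> (y + t *\<^sub>R w)) \<longlongrightarrow> fst p \<bullet> y) (at_right (0::real))" by simp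
      then have "\<forall>\<^sub>F t in at_right (0::real). fst p \<bullet> (y + t *\<^sub>R w) > snd p"
        using True by (rule order_tendstoD(1))
      then show ?thesis by (rule eventually_mono) simp
    next
      case False
      then show ?thesis by simp
    qed
  qed
  have ev2: "\<forall>\<^sub>F t in at_right (0::real). t \<in> {0<..<1}" by (rule eventually_at_right_real) simp
  have "\<forall>\<^sub>F t in at_right (0::real). t \<in> {0<..<1} \<and> (\<forall>p\<in>T. fst p \<bullet> y > snd p \<longrightarrow> fst p \<bullet> (y + t *\<^sub>R w) > snd p)"
    by (rule eventually_conj[OF ev2 ev1])
  then have "at_right (0::real) = bot \<or> (\<exists>t. t \<in> {0<..<1} \<and> (\<forall>p\<in>T. fst p \<bullet> y > snd p \<longrightarrow> fst p \<bullet> (y + t *\<^sub>R w) > snd p))"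
    by (rule eventually_happens)
  moreover have "at_right (0::real) \<noteq> bot" using trivial_limit_at_right_real[of 0] by simp
  ultimately obtain t where t0: "t \<in> {0<..<1}" and t2: "\<forall>p\<in>T. fst p \<bullet> y > snd p \<longrightarrow> fst p \<bullet> (y + t *\<^sub>R w) > snd p"
    by blast
  have t: "t > 0" "\<forall>p\<in>T. fst p \<bullet> y > snd p \<longrightarrow> fst p \<bullet> (y + t *\<^sub>R w) > snd p" using t0 t2 by auto
  define z where "z = y + t *\<^sub>R w"
  have zf: "a \<bullet> z \<ge> b" if fab: "facet_ineq P a b" for a b
  proof -
    have ayb: "a \<bullet> y \<ge> b" using fab yP unfolding facet_ineq_def by blast
    show ?thesis
    proof (cases "a \<bullet> y = b")
      case True
      have "w \<bullet> a \<ge> 0" by (rule tight[OF fab True])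
      then have "t * (a \<bullet> w) \<ge> 0" using t(1) by (simp add: inner_commute)
      then show ?thesis unfolding z_def using True by (simp add: inner_add_right)
    next
      case False
      then have "a \<bullet> y > b" using ayb by simp
      moreover have "(a, b) \<in> T" unfolding T_def using fab by simp
      ultimately show ?thesis using t(2) unfolding z_def by fastforce
    qed
  qed
  have zP: "z \<in> P" using facet_repr[OF S PS fd zf] .
  have "g \<bullet> y \<le> g \<bullet> z" using g yF zP unfolding normal_cone_def by blast
  then have "0 \<le> t * (g \<bullet> w)" unfolding z_def by (simp add: inner_add_right)
  then have "g \<bullet> w \<ge> 0" using t(1) by (simp add: zero_le_mult_iff)
  then show False using wb(1) b0 by (simp add: inner_commute)
qed

lemma core:
  fixes P :: "(real^'n) set"
  assumes S: "finite S" "\<And>x. x \<in> S \<Longrightarrow> rational_pt x" and PS: "P = convex hull S"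
    and fd: "aff_dim P = int CARD('n)"
    and F: "F face_of P" "F \<noteq> {}" and y0: "y0 \<in> F"
    and u: "u \<in> normal_cone P F"
  shows "finite (ray_gens (normal_cone P F)) \<and>
         (\<forall>v\<in>ray_gens (normal_cone P F). facet_ineq P v (v \<bullet> y0)) \<and>
         u \<in> csum (ray_gens (normal_cone P F))"
proof -
  define \<sigma> where "\<sigma> = normal_cone P F"
  define N where "N = {a. \<exists>b. facet_ineq P a b \<and> (\<forall>y\<in>F. a \<bullet> y = b)}"
  define RG where "RG = ray_gens \<sigma>"
  have poly: "polytope P" using S PS polytope_def by blast
  have cvxP: "convex P" using PS by simp
  have FP: "F \<subseteq> P" using F(1) face_of_imp_subset by blast
  have far: "\<And>g. g \<in> \<sigma> \<Longrightarrow> g \<in> csum N"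
    unfolding \<sigma>_def by (rule farkas[OF S PS fd F], simp_all add: N_def)
  define T where "T = {(a, b). facet_ineq P a b}"
  have finT: "finite T" unfolding T_def using finite_facet_ineqs[OF fd poly] .
  have "N \<subseteq> fst ` T" unfolding N_def T_def by force
  then have finN: "finite N" using finT finite_surj by blast
  have NC: "N \<subseteq> \<sigma>"
  proof
    fix a assume "a \<in> N"
    then obtain b where ab: "facet_ineq P a b" "\<forall>y\<in>F. a \<bullet> y = b" unfolding N_def by blast
    have "\<forall>z\<in>P. b \<le> a \<bullet> z" using ab(1) unfolding facet_ineq_def by blast
    then show "a \<in> \<sigma>" unfolding \<sigma>_def normal_cone_def using ab(2) by simp
  qed
  have Nprim: "primitive a" if "a \<in> N" for a using that unfolding N_def facet_ineq_def by blast
  have N0: "0 \<notin> N" using Nprim unfolding primitive_def by blast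
  have C0: "0 \<in> \<sigma>" unfolding \<sigma>_def by (rule nc_0)
  have Cadd: "\<And>x y. x \<in> \<sigma> \<Longrightarrow> y \<in> \<sigma> \<Longrightarrow> x + y \<in> \<sigma>" unfolding \<sigma>_def by (rule nc_add)
  have Cscale: "\<And>x t. x \<in> \<sigma> \<Longrightarrow> t \<ge> 0 \<Longrightarrow> t *\<^sub>R x \<in> \<sigma>" unfolding \<sigma>_def by (rule nc_scale)
  have RGN: "RG \<subseteq> N"
  proof
    fix v assume "v \<in> RG"
    then have pv: "primitive v" and R: "{t *\<^sub>R v | t. t \<ge> 0} face_of \<sigma>" unfolding RG_def ray_gens_def by auto
    have "v \<in> {t *\<^sub>R v | t. t \<ge> 0}" by (rule CollectI, rule exI[of _ 1]) simp
    then have "v \<in> \<sigma>" using R face_of_imp_subset by blast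
    then have "v \<in> csum N" by (rule far)
    moreover have "v \<noteq> 0" using pv primitive_def by blast
    ultimately obtain a s where a: "a \<in> N" "s > 0" "a = s *\<^sub>R v"
      using ray_face_gen[OF finN NC N0 C0 Cadd Cscale _ _ R] by blast
    have "s = 1" by (rule primitive_unique[OF pv Nprim[OF a(1)] a(2) a(3)])
    then show "v \<in> N" using a by simp
  qed
  have finRG: "finite RG" using finN RGN finite_subset by blast
  have facets: "facet_ineq P v (v \<bullet> y0)" if vRG: "v \<in> RG" for v
  proof -
    obtain b where "facet_ineq P v b" "\<forall>y\<in>F. v \<bullet> y = b" using RGN vRG unfolding N_def by blast
    then show ?thesis using y0 by simp
  qed
  have Pne: "P \<noteq> {}" using F FP by blast
  have "rel_interior P \<noteq> {}" using cvxP Pne rel_interior_eq_empty by blast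
  moreover have "interior P = rel_interior P" using fd interior_rel_interior_gen[of P] by simp
  ultimately obtain p where "p \<in> interior P" by auto
  then obtain \<epsilon> where ep: "\<epsilon> > 0" "cball p \<epsilon> \<subseteq> P" using mem_interior_cball by blast
  define w where "w = p - y0"
  have bnd: "\<epsilon> * norm g \<le> w \<bullet> g" if gs: "g \<in> \<sigma>" for g
  proof (cases "g = 0")
    case True then show ?thesis by simp
  next
    case False
    then have ng: "norm g > 0" by simp
    define z where "z = p - (\<epsilon> / norm g) *\<^sub>R g"
    have "dist p z = \<epsilon>" unfolding z_def dist_norm using ng ep(1) by simp
    then have "z \<in> P" using ep(2) by auto
    then have "g \<bullet> y0 \<le> g \<bullet> z" using gs y0 unfolding \<sigma>_def normal_cone_def by blast
    also have "g \<bullet> z = g \<bullet> p - (\<epsilon> / norm g) * (g \<bullet> g)" unfolding z_def by (simp add: inner_diff_right)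
    also have "(\<epsilon> / norm g) * (g \<bullet> g) = \<epsilon> * norm g" using ng by (simp add: power2_norm_eq_inner[symmetric] power2_eq_square)
    finally have "\<epsilon> * norm g \<le> g \<bullet> p - g \<bullet> y0" by simp
    moreover have "w \<bullet> g = g \<bullet> p - g \<bullet> y0" unfolding w_def inner_diff_left by (simp only: inner_commute)
    ultimately show ?thesis by simp
  qed
  have pos: "w \<bullet> g > 0" if "g \<in> \<sigma>" "g \<noteq> 0" for g
  proof -
    have "\<epsilon> * norm g > 0" using that(2) ep(1) by simp
    then show ?thesis using bnd[OF that(1)] by linarith
  qed
  define K where "K = \<sigma> \<inter> {g. w \<bullet> g = 1}"
  have "closed K" unfolding K_def \<sigma>_def by (intro closed_Int nc_closed closed_hyperplane)
  moreover have "bounded K"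
  proof -
    have "K \<subseteq> cball 0 (1 / \<epsilon>)"
    proof
      fix g assume "g \<in> K"
      then have "\<epsilon> * norm g \<le> 1" using bnd unfolding K_def by force
      then have "norm g \<le> 1 / \<epsilon>" using ep(1) by (simp add: field_simps)
      then show "g \<in> cball 0 (1 / \<epsilon>)" by simp
    qed
    then show ?thesis using bounded_cball bounded_subset by blast
  qed
  ultimately have cK: "compact K" using compact_eq_bounded_closed by blast
  have cvK: "convex K" unfolding K_def \<sigma>_def by (intro convex_Int nc_convex convex_hyperplane)
  have KM: "K = convex hull {e. e extreme_point_of K}" by (rule Krein_Milman_Minkowski[OF cK cvK])
  have ext_in: "e \<in> csum RG" if e: "e extreme_point_of K" for e
  proof -
    have R: "{t *\<^sub>R e | t. t \<ge> 0} face_of \<sigma>"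
      by (rule ext_ray_face[OF Cscale pos], use e K_def in simp_all)
    have eK: "e \<in> K" using e extreme_point_of_def by blast
    then have es: "e \<in> \<sigma>" and we: "w \<bullet> e = 1" unfolding K_def by auto
    have e0: "e \<noteq> 0" using we by auto
    obtain a s where a: "a \<in> N" "s > 0" "a = s *\<^sub>R e"
      using ray_face_gen[OF finN NC N0 C0 Cadd Cscale far[OF es] e0 R] by blast
    have "{t *\<^sub>R a | t. t \<ge> 0} = {t *\<^sub>R e | t. t \<ge> 0}"
    proof (rule set_eqI, rule iffI)
      fix x assume "x \<in> {t *\<^sub>R a | t. t \<ge> 0}"
      then obtain t where "t \<ge> 0" "x = t *\<^sub>R a" by blast
      then have "x = (t * s) *\<^sub>R e" "t * s \<ge> 0" using a(2,3) by simp_all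
      then show "x \<in> {t *\<^sub>R e | t. t \<ge> 0}" by blast
    next
      fix x assume "x \<in> {t *\<^sub>R e | t. t \<ge> 0}"
      then obtain t where "t \<ge> 0" "x = t *\<^sub>R e" by blast
      then have "x = (t / s) *\<^sub>R a" "t / s \<ge> 0" using a(2,3) by simp_all
      then show "x \<in> {t *\<^sub>R a | t. t \<ge> 0}" by blast
    qed
    then have "{t *\<^sub>R a | t. t \<ge> 0} face_of \<sigma>" using R by simp
    then have aRG: "a \<in> RG" unfolding RG_def ray_gens_def using Nprim[OF a(1)] by blast
    have "e = (1 / s) *\<^sub>R a" using a(2,3) by simp
    moreover have "(1 / s) *\<^sub>R a \<in> csum RG" using csum_scale[OF csum_gen[OF finRG aRG]] a(2) by simp
    ultimately show ?thesis by simp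
  qed
  have "convex hull {e. e extreme_point_of K} \<subseteq> csum RG"
    using ext_in csum_convex by (intro hull_minimal) auto
  then have Ksub: "K \<subseteq> csum RG" using KM by simp
  have uRG: "u \<in> csum RG"
  proof (cases "u = 0")
    case True then show ?thesis using csum_0 by simp
  next
    case False
    have us: "u \<in> \<sigma>" using u \<sigma>_def by simp
    have wu: "w \<bullet> u > 0" by (rule pos[OF us False])
    define u' where "u' = (1 / (w \<bullet> u)) *\<^sub>R u"
    have "u' \<in> \<sigma>" unfolding u'_def using us wu by (intro Cscale) auto
    moreover have "w \<bullet> u' = 1" unfolding u'_def using wu by simp
    ultimately have "u' \<in> K" unfolding K_def by simp
    then have "u' \<in> csum RG" using Ksub by blast
    then have "(w \<bullet> u) *\<^sub>R u' \<in> csum RG" using wu by (intro csum_scale) auto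
    moreover have "(w \<bullet> u) *\<^sub>R u' = u" unfolding u'_def using wu by simp
    ultimately show ?thesis by simp
  qed
  show ?thesis using finRG facets uRG unfolding RG_def \<sigma>_def by blast
qed

lemma linear_expand:
  fixes \<pi> :: "real^'n \<Rightarrow> real^'k"
  assumes "linear \<pi>"
  shows "\<pi> x = (\<Sum>i\<in>UNIV. x $ i *\<^sub>R \<pi> (axis i 1))"
proof -
  have "x = (\<Sum>i\<in>UNIV. x $ i *\<^sub>R axis i 1)"
    using basis_expansion[of x] by (simp add: scalar_mult_eq_scaleR)
  then have "\<pi> x = \<pi> (\<Sum>i\<in>UNIV. x $ i *\<^sub>R axis i 1)" by simp
  also have "\<dots> = (\<Sum>i\<in>UNIV. x $ i *\<^sub>R \<pi> (axis i 1))"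
    using assms by (simp add: linear_sum linear_scale)
  finally show ?thesis .
qed

lemma facet_dist_finite:
  fixes P :: "(real^'n) set"
  assumes "aff_dim P = int CARD('n)" "polytope P"
  shows "finite {a \<bullet> x - b | a b. facet_ineq P a b}"
proof -
  have "{a \<bullet> x - b | a b. facet_ineq P a b} = (\<lambda>(a, b). a \<bullet> x - b) ` {(a, b). facet_ineq P a b}"
    by auto
  then show ?thesis using finite_facet_ineqs[OF assms] by simp
qed

theorem lemma2p5:
  fixes P :: "(real^'n) set" and \<pi> :: "real^'n \<Rightarrow> real^'k" and \<alpha> :: real
  assumes "rational_polytope P" and "full_dim P"
    and "linear \<pi>" and "surj \<pi>"
    and "\<pi> ` {x. lattice_pt x} = {y. lattice_pt y}"
    and "\<alpha> > 0" and "alpha_canonical_polytope \<alpha> P"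
  shows "\<forall>x\<in>P. \<alpha> * lattice_dist P x \<le> lattice_dist (\<pi> ` P) (\<pi> x)"
proof
  fix x assume xP: "x \<in> P"
  note lin = assms(3)
  obtain S where S: "finite S" "\<And>x. x \<in> S \<Longrightarrow> rational_pt x" and PS: "P = convex hull S"
    using assms(1) unfolding rational_polytope_def by blast
  have fd: "aff_dim P = int CARD('n)" using assms(2) unfolding full_dim_def .
  have polyP: "polytope P" using S PS polytope_def by blast
  define Q where "Q = \<pi> ` P"
  have QS: "Q = convex hull (\<pi> ` S)" unfolding Q_def PS using convex_hull_linear_image[OF lin] by simp
  have latax: "lattice_pt (\<pi> (axis i 1))" for i
    using assms(5) lattice_axis[of i] by blast
  have ratQS: "rational_pt y" if yS: "y \<in> \<pi> ` S" for y
  proof -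
    obtain z where z: "z \<in> S" "y = \<pi> z" using yS by blast
    have "rational_pt (\<Sum>i\<in>UNIV. z $ i *\<^sub>R \<pi> (axis i 1))"
    proof (rule rat_sum)
      fix i
      have zi: "z $ i \<in> \<rat>" using S(2)[OF z(1)] unfolding rational_pt_def by blast
      show "rational_pt (z $ i *\<^sub>R \<pi> (axis i 1))" by (rule rat_scale[OF zi lattice_rat[OF latax]])
    qed
    moreover have "y = (\<Sum>i\<in>UNIV. z $ i *\<^sub>R \<pi> (axis i 1))" unfolding z(2) by (rule linear_expand[OF lin])
    ultimately show ?thesis by (simp only:)
  qed
  have finQS: "finite (\<pi> ` S)" using S(1) by simp
  have polyQ: "polytope Q" using QS finQS polytope_def by blast
  have intP: "interior P \<noteq> {}"
  proof -
    have Pne: "P \<noteq> {}" using xP by blast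
    have "rel_interior P \<noteq> {}" using PS Pne rel_interior_eq_empty convex_convex_hull by blast
    moreover have "interior P = rel_interior P" using fd interior_rel_interior_gen[of P] by simp
    ultimately show ?thesis by simp
  qed
  have fdQ: "aff_dim Q = int CARD('k)"
  proof -
    have "open (\<pi> ` interior P)" by (rule open_surjective_linear_image[OF open_interior lin assms(4)])
    moreover have "\<pi> ` interior P \<subseteq> Q" unfolding Q_def using interior_subset by blast
    ultimately have "\<pi> ` interior P \<subseteq> interior Q" by (rule interior_maximal[rotated])
    then have "interior Q \<noteq> {}" using intP by blast
    then show ?thesis using aff_dim_nonempty_interior[of Q] by simp
  qed
  have cQ: "compact Q" unfolding QS using finQS by (simp add: compact_convex_hull finite_imp_compact)
  have cvQ: "convex Q" unfolding QS by simp
  have Qne: "Q \<noteq> {}" unfolding Q_def using xP by blast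
  obtain v0 where v0: "v0 extreme_point_of Q" using extreme_point_exists_convex[OF cQ cvQ Qne] by blast
  have v0f: "{v0} face_of Q" using v0 face_of_singleton by blast
  have "{v0} \<noteq> Q"
  proof
    assume "{v0} = Q"
    then have "aff_dim Q = 0" by (metis aff_dim_sing)
    then show False using fdQ by simp
  qed
  then obtain G where G: "G facet_of Q" "{v0} \<subseteq> G"
    using face_of_polyhedron_subset_facet[OF polytope_imp_polyhedron[OF polyQ] v0f] by blast
  obtain a1 b1 where "facet_ineq Q a1 b1" using rational_facet[OF finQS ratQS QS fdQ G(1)] by blast
  define SQ where "SQ = {a \<bullet> \<pi> x - b | a b. facet_ineq Q a b}"
  have finSQ: "finite SQ" unfolding SQ_def by (rule facet_dist_finite[OF fdQ polyQ])
  have "a1 \<bullet> \<pi> x - b1 \<in> SQ" unfolding SQ_def using \<open>facet_ineq Q a1 b1\<close> by blast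
  then have "SQ \<noteq> {}" by blast
  then have "Min SQ \<in> SQ" using finSQ by simp
  then obtain a b where ab: "facet_ineq Q a b" "Min SQ = a \<bullet> \<pi> x - b" unfolding SQ_def by blast
  have dQ: "lattice_dist (\<pi> ` P) (\<pi> x) = a \<bullet> \<pi> x - b"
    unfolding lattice_dist_def Q_def[symmetric] SQ_def[symmetric] using ab(2) .
  have vQ: "\<And>y. y \<in> Q \<Longrightarrow> a \<bullet> y \<ge> b" using ab(1) unfolding facet_ineq_def by blast
  have dQ0: "a \<bullet> \<pi> x - b \<ge> 0" using vQ[of "\<pi> x"] xP Q_def by auto
  define u where "u = adjoint \<pi> a"
  have uz: "u \<bullet> z = a \<bullet> \<pi> z" for z
    unfolding u_def using adjoint_works[OF lin, of z a] by (simp add: inner_commute)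
  have la: "lattice_pt a" using ab(1) unfolding facet_ineq_def primitive_def by blast
  have lu: "lattice_pt u" unfolding lattice_pt_def
  proof
    fix i
    have "u $ i = u \<bullet> axis i 1" by (rule cart_eq_inner_axis)
    also have "\<dots> = a \<bullet> \<pi> (axis i 1)" by (rule uz)
    finally show "u $ i \<in> \<int>" using lattice_inner[OF la latax] by simp
  qed
  have u0: "u \<noteq> 0"
  proof
    assume "u = 0"
    obtain z where "\<pi> z = a" using assms(4) by (metis surjD)
    then have "a \<bullet> a = 0" using uz[of z] \<open>u = 0\<close> by simp
    then have "a = 0" by simp
    then show False using ab(1) unfolding facet_ineq_def primitive_def by blast
  qed
  define F where "F = P \<inter> {z. u \<bullet> z = b}"
  have vP: "\<And>z. z \<in> P \<Longrightarrow> u \<bullet> z \<ge> b" using vQ uz Q_def by auto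
  have Fface: "F face_of P" unfolding F_def
    by (rule face_of_Int_supporting_hyperplane_ge) (use PS vP in auto)
  have "{y \<in> Q. a \<bullet> y = b} \<noteq> {}" using ab(1) unfolding facet_ineq_def facet_of_def by blast
  then obtain y0 where y0: "y0 \<in> P" "a \<bullet> \<pi> y0 = b" unfolding Q_def by blast
  have y0F: "y0 \<in> F" unfolding F_def using y0 uz by simp
  have Fne: "F \<noteq> {}" using y0F by blast
  have uN: "u \<in> normal_cone P F"
    unfolding normal_cone_def F_def using vP by auto
  define \<sigma> where "\<sigma> = normal_cone P F"
  have "\<sigma> \<in> normal_fan P" unfolding normal_fan_def \<sigma>_def using Fface Fne by blast
  then have "alpha_canonical_cone \<alpha> \<sigma>" using assms(7) unfolding alpha_canonical_polytope_def by blast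
  then have hgt: "height \<sigma> u \<ge> \<alpha>" unfolding alpha_canonical_cone_def using uN lu u0 \<sigma>_def by blast
  have core': "finite (ray_gens \<sigma>) \<and> (\<forall>v\<in>ray_gens \<sigma>. facet_ineq P v (v \<bullet> y0)) \<and> u \<in> csum (ray_gens \<sigma>)"
    unfolding \<sigma>_def by (rule core[OF S PS fd Fface Fne y0F uN])
  define RG where "RG = ray_gens \<sigma>"
  have finRG: "finite RG" and facRG: "\<And>v. v \<in> RG \<Longrightarrow> facet_ineq P v (v \<bullet> y0)" and uRG: "u \<in> csum RG"
    using core' unfolding RG_def by auto
  obtain c where c: "\<forall>v\<in>RG. c v \<ge> 0" "(\<Sum>v\<in>RG. c v *\<^sub>R v) = u" using uRG unfolding csum_def by blast
  define SP where "SP = {a \<bullet> x - b | a b. facet_ineq P a b}"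
  have finSP: "finite SP" unfolding SP_def by (rule facet_dist_finite[OF fd polyP])
  have inSP: "v \<bullet> x - v \<bullet> y0 \<in> SP" if "v \<in> RG" for v unfolding SP_def using facRG[OF that] by blast
  have "RG \<noteq> {}"
  proof
    assume "RG = {}"
    then have "u = 0" using c(2) by simp
    then show False using u0 by simp
  qed
  then obtain v1 where "v1 \<in> RG" by blast
  then have SPne: "SP \<noteq> {}" using inSP by blast
  have dP: "lattice_dist P x = Min SP" unfolding lattice_dist_def SP_def ..
  have SP0: "s \<ge> 0" if "s \<in> SP" for s
    using that xP unfolding SP_def facet_ineq_def by auto
  have m0: "Min SP \<ge> 0" using SP0 Min_in[OF finSP SPne] by blast
  have bu: "b = u \<bullet> y0" using y0(2) uz by simp
  have key: "(\<Sum>v\<in>RG. c' v) * Min SP \<le> a \<bullet> \<pi> x - b"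
    if c': "\<forall>v\<in>RG. c' v \<ge> 0" "(\<Sum>v\<in>RG. c' v *\<^sub>R v) = u" for c'
  proof -
    have "a \<bullet> \<pi> x - b = u \<bullet> x - u \<bullet> y0" using uz bu by simp
    also have "\<dots> = (\<Sum>v\<in>RG. c' v * (v \<bullet> x)) - (\<Sum>v\<in>RG. c' v * (v \<bullet> y0))"
      unfolding c'(2)[symmetric] inner_sum_left by simp
    also have "\<dots> = (\<Sum>v\<in>RG. c' v * (v \<bullet> x - v \<bullet> y0))"
      by (simp add: sum_subtractf right_diff_distrib)
    finally have eq: "a \<bullet> \<pi> x - b = (\<Sum>v\<in>RG. c' v * (v \<bullet> x - v \<bullet> y0))" .
    have "(\<Sum>v\<in>RG. c' v) * Min SP = (\<Sum>v\<in>RG. c' v * Min SP)" by (rule sum_distrib_right)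
    also have "\<dots> \<le> (\<Sum>v\<in>RG. c' v * (v \<bullet> x - v \<bullet> y0))"
    proof (rule sum_mono)
      fix v assume vRG: "v \<in> RG"
      have "Min SP \<le> v \<bullet> x - v \<bullet> y0" using Min_le[OF finSP inSP[OF vRG]] .
      then show "c' v * Min SP \<le> c' v * (v \<bullet> x - v \<bullet> y0)" using c'(1) vRG by (simp add: mult_left_mono)
    qed
    finally show ?thesis using eq by simp
  qed
  define H where "H = {(\<Sum>v\<in>ray_gens \<sigma>. c v) | c.
       (\<forall>v\<in>ray_gens \<sigma>. c v \<ge> 0) \<and> (\<Sum>v\<in>ray_gens \<sigma>. c v *\<^sub>R v) = u}"
  have hH: "height \<sigma> u = Sup H" unfolding height_def H_def ..
  show "\<alpha> * lattice_dist P x \<le> lattice_dist (\<pi> ` P) (\<pi> x)"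
  proof (cases "Min SP = 0")
    case True
    then show ?thesis using dP dQ dQ0 by simp
  next
    case False
    then have mpos: "Min SP > 0" using m0 by simp
    have Hne: "H \<noteq> {}" unfolding H_def RG_def[symmetric] using c by blast
    have "\<forall>h\<in>H. h \<le> (a \<bullet> \<pi> x - b) / Min SP"
    proof
      fix h assume "h \<in> H"
      then obtain c' where c': "\<forall>v\<in>RG. c' v \<ge> 0" "(\<Sum>v\<in>RG. c' v *\<^sub>R v) = u" "h = (\<Sum>v\<in>RG. c' v)"
        unfolding H_def RG_def by blast
      have "h * Min SP \<le> a \<bullet> \<pi> x - b" using key[OF c'(1,2)] c'(3) by simp
      then show "h \<le> (a \<bullet> \<pi> x - b) / Min SP" using mpos by (simp add: pos_le_divide_eq)
    qed
    then have "Sup H \<le> (a \<bullet> \<pi> x - b) / Min SP" using Hne by (intro cSup_least) auto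
    then have "\<alpha> \<le> (a \<bullet> \<pi> x - b) / Min SP" using hgt hH by simp
    then have "\<alpha> * Min SP \<le> a \<bullet> \<pi> x - b" using mpos by (simp add: pos_le_divide_eq)
    then show ?thesis using dP dQ by simp
  qed
qed


end
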